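(* Let $n\geq 2$ and let $C$ be an all-ones CRC in $G_n$ with covering radius $\rho\geq 1$, $c_1=1$, $\mathbf{0}\in C$ and $-e_n\in C$. Then for any two distinct slice pairs $A,B\subseteq C$ lying in the same $s$-slice, $d(x,y)\geq 4$ for all $x\in A$, $y\in B$.
   Context: $G_n$: vertex set $\mathbb{Z}^n$, $x\sim y$ iff $\sum_i|x_i-y_i|=1$, $d$ its distance; $e_i$ the $i$-th unit vector. For a code $C$ with covering radius $\rho$, $C_i=\{v:d(v,C)=i\}$. $C$ is a CRC if for all $i,j$ every vertex of $C_i$ has the same number $\alpha_{ij}$ of neighbours in $C_j$, with $\alpha_{ij}=0$ for $|i-j|>1$; $a_i=\alpha_{ii}$, $c_i=\alpha_{i,i-1}$. $C$ is all-ones if $a_i=1$ for all $i$. For $s\in\mathbb{Z}$, the $s$-slice is $\{x: x_n\in\{2s,2s-1\}\}$; a slice pair is $\{x,x-e_n\}$ with $x_n=2s$ for some $s$. *)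

theory Defs
  imports Main
begin

text \<open>Vertices of G_n = Z^n are represented as functions nat => int that vanish
  outside the coordinates 0..n-1. Coordinate i-1 here is the paper's coordinate i,
  so the paper's e_n is the unit vector at index n-1.\<close>

definition vertices :: "nat \<Rightarrow> (nat \<Rightarrow> int) set" where
  "vertices n = {x. \<forall>i\<ge>n. x i = 0}"

definition gdist :: "nat \<Rightarrow> (nat \<Rightarrow> int) \<Rightarrow> (nat \<Rightarrow> int) \<Rightarrow> nat" where
  "gdist n x y = (\<Sum>i<n. nat \<bar>x i - y i\<bar>)"

definition adj :: "nat \<Rightarrow> (nat \<Rightarrow> int) \<Rightarrow> (nat \<Rightarrow> int) \<Rightarrow> bool" where
  "adj n x y \<longleftrightarrow> gdist n x y = 1"

definition unit_vec :: "nat \<Rightarrow> nat \<Rightarrow> int" where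
  "unit_vec i = (\<lambda>j. if j = i then 1 else 0)"

definition dist_code :: "nat \<Rightarrow> (nat \<Rightarrow> int) set \<Rightarrow> (nat \<Rightarrow> int) \<Rightarrow> nat" where
  "dist_code n C v = Inf {gdist n c v | c. c \<in> C}"

definition covering_radius :: "nat \<Rightarrow> (nat \<Rightarrow> int) set \<Rightarrow> nat \<Rightarrow> bool" where
  "covering_radius n C \<rho> \<longleftrightarrow> C \<noteq> {} \<and> C \<subseteq> vertices n \<and>
     (\<forall>v\<in>vertices n. dist_code n C v \<le> \<rho>) \<and> (\<exists>v\<in>vertices n. dist_code n C v = \<rho>)"

definition layer :: "nat \<Rightarrow> (nat \<Rightarrow> int) set \<Rightarrow> nat \<Rightarrow> (nat \<Rightarrow> int) set" where
  "layer n C i = {v \<in> vertices n. dist_code n C v = i}"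

definition nbrs_in :: "nat \<Rightarrow> (nat \<Rightarrow> int) set \<Rightarrow> (nat \<Rightarrow> int) \<Rightarrow> nat" where
  "nbrs_in n S v = card {w \<in> S. adj n v w}"

definition is_CRC :: "nat \<Rightarrow> (nat \<Rightarrow> int) set \<Rightarrow> (nat \<Rightarrow> nat \<Rightarrow> nat) \<Rightarrow> bool" where
  "is_CRC n C \<alpha> \<longleftrightarrow>
     (\<forall>i j. \<forall>v\<in>layer n C i. nbrs_in n (layer n C j) v = \<alpha> i j) \<and>
     (\<forall>i j. (i > j + 1 \<or> j > i + 1) \<longrightarrow> \<alpha> i j = 0)"

definition all_ones_CRC :: "nat \<Rightarrow> (nat \<Rightarrow> int) set \<Rightarrow> nat \<Rightarrow> (nat \<Rightarrow> nat \<Rightarrow> nat) \<Rightarrow> bool" where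
  "all_ones_CRC n C \<rho> \<alpha> \<longleftrightarrow> is_CRC n C \<alpha> \<and> (\<forall>i\<le>\<rho>. \<alpha> i i = 1)"

definition slice :: "nat \<Rightarrow> int \<Rightarrow> (nat \<Rightarrow> int) set" where
  "slice n s = {x \<in> vertices n. x (n - 1) = 2 * s \<or> x (n - 1) = 2 * s - 1}"

definition slice_pair :: "nat \<Rightarrow> (nat \<Rightarrow> int) set \<Rightarrow> bool" where
  "slice_pair n A \<longleftrightarrow> (\<exists>x\<in>vertices n. \<exists>s. x (n - 1) = 2 * s \<and>
       A = {x, x - unit_vec (n - 1)})"

end

theory Submission
  imports Defs
begin

lemma gdist_sym: "gdist n x y = gdist n y x"
  unfolding gdist_def by (simp add: abs_minus_commute)

lemma gdist_self: "gdist n x x = 0"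
  unfolding gdist_def by simp

lemma adj_sym: "adj n x y = adj n y x"
  unfolding adj_def by (simp add: gdist_sym)

lemma gdist_upd:
  assumes "i < n"
  shows "int (gdist n (x(i := v)) y) = int (gdist n x y) - \<bar>x i - y i\<bar> + \<bar>v - y i\<bar>"
proof -
  have "gdist n x y = nat \<bar>x i - y i\<bar> + (\<Sum>j\<in>{..<n}-{i}. nat \<bar>x j - y j\<bar>)"
    unfolding gdist_def using assms by (simp add: sum.remove)
  moreover have "(\<Sum>j\<in>{..<n}-{i}. nat \<bar>(x(i:=v)) j - y j\<bar>) = (\<Sum>j\<in>{..<n}-{i}. nat \<bar>x j - y j\<bar>)"
    by (rule sum.cong) auto
  moreover have "gdist n (x(i:=v)) y = nat \<bar>v - y i\<bar> + (\<Sum>j\<in>{..<n}-{i}. nat \<bar>(x(i:=v)) j - y j\<bar>)"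
    unfolding gdist_def using assms by (simp add: sum.remove)
  ultimately show ?thesis by simp
qed

lemma gdist_zero:
  assumes "x \<in> vertices n" "y \<in> vertices n" "gdist n x y = 0" shows "x = y"
proof
  fix j show "x j = y j"
  proof (cases "j < n")
    case True
    have "nat \<bar>x j - y j\<bar> = 0" using assms(3) True unfolding gdist_def
      by (simp add: sum_eq_0_iff)
    then show ?thesis by simp
  next
    case False then show ?thesis using assms unfolding vertices_def by simp
  qed
qed

lemma gdist_diff:
  assumes "gdist n x y \<noteq> 0" obtains i where "i < n" "x i \<noteq> y i"
  using assms unfolding gdist_def by (metis (mono_tags, lifting) lessThan_iff sum.neutral nat_0 abs_0 diff_self)

lemma vert_upd: "x \<in> vertices n \<Longrightarrow> i < n \<Longrightarrow> x(i := v) \<in> vertices n"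
  unfolding vertices_def by auto

lemma step_toward:
  assumes "i < n" "x i \<noteq> y i"
  shows "int (gdist n (x(i := x i + sgn (y i - x i))) y) = int (gdist n x y) - 1"
  using gdist_upd[OF assms(1), of x "x i + sgn (y i - x i)" y] assms(2)
  by (cases "x i < y i") (auto simp: sgn_if)

lemma adj_upd:
  assumes "i < n" "\<bar>d\<bar> = 1"
  shows "adj n (x(i := x i + d)) x" "adj n x (x(i := x i + d))"
proof -
  have "int (gdist n (x(i := x i + d)) x) = 1"
    using gdist_upd[OF assms(1), of x "x i + d" x] assms(2) by (simp add: gdist_self)
  then show "adj n (x(i := x i + d)) x" unfolding adj_def by simp
  then show "adj n x (x(i := x i + d))" by (simp add: adj_sym)
qed

lemma card1_unique: "card {w \<in> S. P w} = 1 \<Longrightarrow> w1 \<in> S \<Longrightarrow> w2 \<in> S \<Longrightarrow> P w1 \<Longrightarrow> P w2 \<Longrightarrow> w1 = w2"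
  by (metis (mono_tags, lifting) card_1_singletonE mem_Collect_eq singletonD)

lemma in_layer0:
  assumes "C \<subseteq> vertices n" "c \<in> C" shows "c \<in> layer n C 0"
proof -
  have "0 \<in> {gdist n c' c | c'. c' \<in> C}" using assms by (intro CollectI exI[of _ c]) (simp add: gdist_self)
  then have "Inf {gdist n c' c | c'. c' \<in> C} \<le> 0" by (rule cInf_lower) simp
  then have "dist_code n C c = 0" unfolding dist_code_def by simp
  then show ?thesis using assms unfolding layer_def by auto
qed

lemma in_layer1:
  assumes "C \<subseteq> vertices n" "v \<in> vertices n" "v \<notin> C" "c \<in> C" "adj n v c"
  shows "v \<in> layer n C 1"
proof -
  let ?S = "{gdist n c' v | c'. c' \<in> C}"
  have "gdist n c v = 1" using assms(5) unfolding adj_def by (simp add: gdist_sym)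
  then have 1: "1 \<in> ?S" using assms(4) by (intro CollectI exI[of _ c]) simp
  have 0: "0 \<notin> ?S"
  proof
    assume "0 \<in> ?S"
    then obtain c' where "c' \<in> C" "gdist n c' v = 0" by auto
    then have "c' = v" using gdist_zero[of c' n v] assms(1,2) by blast
    then show False using \<open>c' \<in> C\<close> assms(3) by simp
  qed
  have ne: "?S \<noteq> {}" using 1 by blast
  have "Inf ?S \<in> ?S" using Inf_nat_def1[OF ne] .
  moreover have "Inf ?S \<le> 1" using 1 by (simp add: cInf_lower)
  ultimately have "Inf ?S = 1" using 0 by (cases "Inf ?S") auto
  then show ?thesis using assms unfolding layer_def dist_code_def by auto
qed

context
  fixes n :: nat and C :: "(nat \<Rightarrow> int) set" and \<alpha> :: "nat \<Rightarrow> nat \<Rightarrow> nat"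
  assumes CV: "C \<subseteq> vertices n" and crc: "is_CRC n C \<alpha>"
    and a00: "\<alpha> 0 0 = 1" and a10: "\<alpha> 1 0 = 1" and a11: "\<alpha> 1 1 = 1"
begin

lemma code_nb_unique:
  assumes "a \<in> C" "b1 \<in> C" "b2 \<in> C" "adj n a b1" "adj n a b2" shows "b1 = b2"
proof -
  have "nbrs_in n (layer n C 0) a = 1" using crc a00 in_layer0[OF CV assms(1)] unfolding is_CRC_def by auto
  then show ?thesis using card1_unique[of "layer n C 0" "adj n a" b1 b2] assms in_layer0[OF CV]
    unfolding nbrs_in_def by auto
qed

lemma c1_unique:
  assumes "v \<in> vertices n" "v \<notin> C" "b1 \<in> C" "b2 \<in> C" "adj n v b1" "adj n v b2" shows "b1 = b2"
proof -
  have "v \<in> layer n C 1" using in_layer1[OF CV] assms by blast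
  then have "nbrs_in n (layer n C 0) v = 1" using crc a10 unfolding is_CRC_def by auto
  then show ?thesis using card1_unique[of "layer n C 0" "adj n v" b1 b2] assms in_layer0[OF CV]
    unfolding nbrs_in_def by auto
qed

lemma l1_unique:
  assumes "v \<in> layer n C 1" "w1 \<in> layer n C 1" "w2 \<in> layer n C 1" "adj n v w1" "adj n v w2"
  shows "w1 = w2"
proof -
  have "nbrs_in n (layer n C 1) v = 1" using crc a11 assms(1) unfolding is_CRC_def by auto
  then show ?thesis using card1_unique[of "layer n C 1" "adj n v" w1 w2] assms
    unfolding nbrs_in_def by auto
qed

lemma no2:
  assumes "a \<in> C" "b \<in> C" "gdist n a b = 2" shows False
proof -
  obtain i where i: "i < n" "a i \<noteq> b i" using gdist_diff assms(3) by (metis zero_neq_numeral)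
  define z where "z = a(i := a i + sgn (b i - a i))"
  have av: "a \<in> vertices n" using CV assms by auto
  have zv: "z \<in> vertices n" unfolding z_def using vert_upd[OF av i(1)] .
  have "int (gdist n z b) = 1" unfolding z_def using step_toward[of i n a b, OF i] assms(3) by simp
  then have zb: "adj n z b" unfolding adj_def by simp
  have za: "adj n z a" unfolding z_def using adj_upd[OF i(1)] i(2) by (simp add: abs_sgn_eq)
  have ab: "a \<noteq> b" using assms(3) gdist_self by (metis zero_neq_numeral)
  show False
  proof (cases "z \<in> C")
    case True then show ?thesis using code_nb_unique[OF True assms(1,2)] za zb ab by blast
  next
    case False then show ?thesis using c1_unique[OF zv False assms(1,2)] za zb ab by blast
  qed
qed

lemma main3:
  assumes "a \<in> C" "b \<in> C" "\<bar>\<delta>\<bar> = 1" "a(k := a k + \<delta>) \<in> C" "k < n"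
    and "a k = b k" "gdist n a b = 3"
  shows False
proof -
  define p where "p = a(k := a k + \<delta>)"
  have pC: "p \<in> C" using assms p_def by simp
  have av: "a \<in> vertices n" using CV assms by auto
  have bv: "b \<in> vertices n" using CV assms by auto
  have pv: "p \<in> vertices n" using CV pC by auto
  have ap: "adj n a p" unfolding p_def using adj_upd(2)[OF assms(5,3)] .
  obtain i where i: "i < n" "a i \<noteq> b i" using gdist_diff assms(7) by (metis zero_neq_numeral)
  have ik: "i \<noteq> k" using i assms(6) by auto
  define \<sigma> where "\<sigma> = sgn (b i - a i)"
  have s1: "\<bar>\<sigma>\<bar> = 1" unfolding \<sigma>_def using i(2) by (simp add: abs_sgn_eq)
  define u where "u = a(i := a i + \<sigma>)"
  have uv: "u \<in> vertices n" unfolding u_def using vert_upd[OF av i(1)] .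
  have "int (gdist n u b) = 2" unfolding u_def \<sigma>_def using step_toward[of i n a b, OF i] assms(7) by simp
  then have ub: "gdist n u b = 2" by simp
  have au: "adj n a u" unfolding u_def using adj_upd(2)[OF i(1) s1] .
  have uk: "u k = a k" unfolding u_def using ik by simp
  have pk: "p k = a k + \<delta>" unfolding p_def by simp
  have uC: "u \<notin> C"
  proof
    assume "u \<in> C"
    then have "u = p" using code_nb_unique[OF assms(1) _ pC au ap] by blast
    then show False using uk pk assms(3) by auto
  qed
  have u1: "u \<in> layer n C 1" using in_layer1[OF CV uv uC assms(1)] au adj_sym by blast
  define u' where "u' = p(i := p i + \<sigma>)"
  have u'v: "u' \<in> vertices n" unfolding u'_def using vert_upd[OF pv i(1)] .
  have pu': "adj n p u'" unfolding u'_def using adj_upd(2)[OF i(1) s1] .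
  have pa: "adj n p a" using ap adj_sym by blast
  have u'k: "u' k = a k + \<delta>" unfolding u'_def p_def using ik by simp
  have u'C: "u' \<notin> C"
  proof
    assume "u' \<in> C"
    then have "u' = a" using code_nb_unique[OF pC _ assms(1) pu' pa] by blast
    then show False using u'k assms(3) by auto
  qed
  have u'1: "u' \<in> layer n C 1" using in_layer1[OF CV u'v u'C pC] pu' adj_sym by blast
  have u'eq: "u' = u(k := u k + \<delta>)" unfolding u'_def u_def p_def using ik
    by (auto simp: fun_eq_iff)
  have uu': "adj n u u'" unfolding u'eq using adj_upd(2)[OF assms(5,3)] .
  obtain j where j: "j < n" "u j \<noteq> b j" using gdist_diff ub by (metis zero_neq_numeral)
  have jk: "j \<noteq> k" using j uk assms(6) by auto
  define w where "w = u(j := u j + sgn (b j - u j))"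
  have wv: "w \<in> vertices n" unfolding w_def using vert_upd[OF uv j(1)] .
  have "int (gdist n w b) = 1" unfolding w_def using step_toward[of j n u b, OF j] ub by simp
  then have wbd: "gdist n w b = 1" by simp
  then have wb: "adj n w b" unfolding adj_def by simp
  have uw: "adj n u w" unfolding w_def using adj_upd(2)[OF j(1)] j(2) by (simp add: abs_sgn_eq)
  have ua: "adj n u a" using au adj_sym by blast
  have wC: "w \<notin> C"
  proof
    assume "w \<in> C"
    then have "w = a" using c1_unique[OF uv uC assms(1) _ ua uw] by blast
    then show False using wbd assms(7) by simp
  qed
  have w1: "w \<in> layer n C 1" using in_layer1[OF CV wv wC assms(2) wb] .
  have "u' = w" using l1_unique[OF u1 u'1 w1 uu' uw] .
  moreover have "w k = a k" unfolding w_def using jk uk by simp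
  ultimately show False using u'k assms(3) by auto
qed

end

lemma pair_form:
  assumes "slice_pair n A" "A \<subseteq> slice n s" "n \<ge> 2"
  obtains x0 where "x0 \<in> vertices n" "x0 (n-1) = 2*s" "A = {x0, x0(n-1 := 2*s - 1)}"
proof -
  obtain x0 s1 where x0: "x0 \<in> vertices n" "x0 (n-1) = 2*s1" "A = {x0, x0 - unit_vec (n-1)}"
    using assms(1) unfolding slice_pair_def by blast
  have e: "x0 - unit_vec (n-1) = x0(n-1 := 2*s1 - 1)"
    using x0(2) by (auto simp: fun_eq_iff unit_vec_def)
  have "x0 (n-1) = 2*s \<or> x0 (n-1) = 2*s - 1" using assms(2) x0 unfolding slice_def by auto
  then have "s1 = s" using x0(2) by presburger
  then show ?thesis using that x0 e by auto
qed

lemma pair_partner: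
  fixes a x0 :: "nat \<Rightarrow> int"
  assumes "A = {x0, x0(k := 2*s - 1)}" "x0 k = 2*s" "a \<in> A"
  shows "\<exists>\<delta>. \<bar>\<delta>\<bar> = 1 \<and> a(k := a k + \<delta>) \<in> A"
proof (cases "a = x0")
  case True
  then have "a(k := a k + (-1)) \<in> A" using assms by simp
  then show ?thesis by (intro exI[of _ "-1"]) simp
next
  case False
  then have a: "a = x0(k := 2*s - 1)" using assms by auto
  have "a(k := a k + 1) = x0" unfolding a using assms(2) by (auto simp: fun_eq_iff)
  then show ?thesis using assms by (intro exI[of _ 1]) simp
qed

theorem mainTheorem9:
  fixes n \<rho> :: nat and C A B :: "(nat \<Rightarrow> int) set" and \<alpha> :: "nat \<Rightarrow> nat \<Rightarrow> nat"
    and s :: int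
  assumes "n \<ge> 2"
    and "covering_radius n C \<rho>" and "\<rho> \<ge> 1"
    and "all_ones_CRC n C \<rho> \<alpha>"
    and "\<alpha> 1 0 = 1"
    and "(\<lambda>_. 0) \<in> C"
    and "- unit_vec (n - 1) \<in> C"
    and "slice_pair n A" and "slice_pair n B" and "A \<noteq> B"
    and "A \<subseteq> C" and "B \<subseteq> C"
    and "A \<subseteq> slice n s" and "B \<subseteq> slice n s"
  shows "\<forall>x\<in>A. \<forall>y\<in>B. gdist n x y \<ge> 4"
proof (intro ballI)
  fix a b assume aA: "a \<in> A" and bB: "b \<in> B"
  define k where "k = n - 1"
  have kn: "k < n" using assms(1) k_def by simp
  have CV: "C \<subseteq> vertices n" using assms(2) unfolding covering_radius_def by blast
  have crc: "is_CRC n C \<alpha>" using assms(4) unfolding all_ones_CRC_def by blast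
  have a00: "\<alpha> 0 0 = 1" and a11: "\<alpha> 1 1 = 1" using assms(3,4) unfolding all_ones_CRC_def by auto
  note a10 = assms(5)
  obtain x0 where x0: "x0 \<in> vertices n" "x0 k = 2*s" "A = {x0, x0(k := 2*s - 1)}"
    using pair_form[OF assms(8,13,1)] k_def by metis
  obtain y0 where y0: "y0 \<in> vertices n" "y0 k = 2*s" "B = {y0, y0(k := 2*s - 1)}"
    using pair_form[OF assms(9,14,1)] k_def by metis
  have xy: "x0 \<noteq> y0" using x0 y0 assms(10) by auto
  have disj: "A \<inter> B = {}"
  proof -
    have "x0(k := 2*s - 1) \<noteq> y0(k := 2*s - 1)"
    proof
      assume "x0(k := 2*s - 1) = y0(k := 2*s - 1)"
      moreover have "x0 = (x0(k := 2*s - 1))(k := 2*s)" using x0(2) by (auto simp: fun_eq_iff)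
      moreover have "y0 = (y0(k := 2*s - 1))(k := 2*s)" using y0(2) by (auto simp: fun_eq_iff)
      ultimately have "x0 = y0" by metis
      then show False using xy by simp
    qed
    moreover have "x0 \<noteq> y0(k := 2*s - 1)" using x0(2) by (auto simp: fun_eq_iff)
    moreover have "x0(k := 2*s - 1) \<noteq> y0" using y0(2) by (auto simp: fun_eq_iff)
    ultimately show ?thesis using x0(3) y0(3) xy by auto
  qed
  have aC: "a \<in> C" and bC: "b \<in> C" using aA bB assms(11,12) by auto
  have av: "a \<in> vertices n" and bv: "b \<in> vertices n" using aC bC CV by auto
  have alev: "a k = 2*s \<or> a k = 2*s - 1" using aA x0 by auto
  have blev: "b k = 2*s \<or> b k = 2*s - 1" using bB y0 by auto
  have alev2: "a k = 2*s - 1 \<Longrightarrow> a(k := a k + 1) \<in> A"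
    using aA x0 by (auto simp: fun_eq_iff)
  have blev2: "b k = 2*s - 1 \<Longrightarrow> b(k := b k + 1) \<in> B"
    using bB y0 by (auto simp: fun_eq_iff)
  obtain \<delta> where d: "\<bar>\<delta>\<bar> = 1" "a(k := a k + \<delta>) \<in> A" using pair_partner[OF x0(3,2) aA] by blast
  show "gdist n a b \<ge> 4"
  proof (rule ccontr)
    assume "\<not> gdist n a b \<ge> 4"
    then have "gdist n a b = 0 \<or> gdist n a b = 1 \<or> gdist n a b = 2 \<or> gdist n a b = 3" by auto
    then show False
    proof (elim disjE)
      assume "gdist n a b = 0"
      then have "a = b" using gdist_zero av bv by blast
      then show False using disj aA bB by auto
    next
      assume "gdist n a b = 1"
      then have ab: "adj n a b" unfolding adj_def .
      have ap: "adj n a (a(k := a k + \<delta>))" using adj_upd(2)[OF kn d(1)] .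
      have "b = a(k := a k + \<delta>)"
        using code_nb_unique[OF CV crc a00 a10 a11 aC bC _ ab ap] d(2) assms(11) by blast
      then show False using disj d(2) bB by auto
    next
      assume "gdist n a b = 2"
      then show False using no2[OF CV crc a00 a10 a11 aC bC] by blast
    next
      assume g3: "gdist n a b = 3"
      show False
      proof (cases "a k = b k")
        case True
        show False using main3[OF CV crc a00 a10 a11 aC bC d(1) _ kn True g3] d(2) assms(11) by blast
      next
        case False
        show False
        proof (cases "a k = 2*s - 1")
          case True
          then have bk: "b k = 2*s" using False blev by auto
          have pC: "a(k := a k + 1) \<in> C" using alev2[OF True] assms(11) by blast
          have "int (gdist n (a(k := a k + 1)) b) = 2"
            using gdist_upd[OF kn, of a "a k + 1" b] g3 True bk by simp
          then show False using no2[OF CV crc a00 a10 a11 pC bC] by simp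
        next
          case False2: False
          then have ak: "a k = 2*s" and bk: "b k = 2*s - 1" using False alev blev by auto
          have qC: "b(k := b k + 1) \<in> C" using blev2[OF bk] assms(12) by blast
          have "int (gdist n (b(k := b k + 1)) a) = 2"
            using gdist_upd[OF kn, of b "b k + 1" a] g3 ak bk gdist_sym[of n a b] by simp
          then show False using no2[OF CV crc a00 a10 a11 qC aC] by simp
        qed
      qed
    qed
  qed
qed

end
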